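(* Let $k=(k_1,k_2)\in\mathfrak{h}_\mathbb{C}\otimes\mathbb{C}^2$ with $k_1+ik_2\neq0$. There exists no (possibly unbounded) operator $M$ on $\mathfrak{H}$ whose domain contains the vacuum vector $\Omega$ such that $\mathbb{E}(MB)=\mathbb{E}(D_kB)$ holds for all $B\in\mathrm{Dom}\,D_k$, where $\mathbb{E}(X)=\langle\Omega,X\Omega\rangle$.
   Context: $\mathfrak{h}$ is a real separable Hilbert space, $\mathfrak{h}_\mathbb{C}$ its complexification (inner products antilinear in the first argument), with conjugation $\overline{h_1+ih_2}=h_1-ih_2$. $\mathfrak{H}=\Gamma_s(\mathfrak{h}_\mathbb{C})$ is the symmetric Fock space with vacuum $\Omega$ and exponential vectors $\mathcal{E}(k)=\sum_nk^{\otimes n}/\sqrt{n!}$. $a(h),a^+(h)$ are annihilation/creation operators ($a(h)\mathcal{E}(g)=\langle h,g\rangle\mathcal{E}(g)$, $a^+(h)=a(h)^*$), $Q(h)=a(\overline h)+a^+(h)$, $P(h)=i(a(\overline h)-a^+(h))$. An expression $\sum_jX_jB_jY_j$ (with $X_j,Y_j$ defined on exponential vectors together with their adjoints, $B_j$ bounded) defines a bounded operator $M$ if $\langle\mathcal{E}(f),M\mathcal{E}(g)\rangle=\sum_j\langle X_j^*\mathcal{E}(f),B_jY_j\mathcal{E}(g)\rangle$ for all $f,g\in\mathfrak{h}_\mathbb{C}$. For $k=(k_1,k_2)\in\mathfrak{h}_\mathbb{C}\otimes\mathbb{C}^2$, $\mathrm{Dom}\,D_k$ is the set of $B\in\mathcal{B}(\mathfrak{H})$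 such that $\frac i2[Q(k_1)-P(k_2),B]$ defines a bounded operator, and $D_kB$ is that operator. *)

theory Defs
  imports "HOL-Analysis.Analysis"
begin

text \<open>Complex Hilbert spaces are modelled as real Hilbert spaces carrying a complex
structure J (multiplication by the imaginary unit): orthogonal, linear, J o J = -id.\<close>

definition complex_structure :: "('a::real_inner \<Rightarrow> 'a) \<Rightarrow> bool" where
  "complex_structure J \<longleftrightarrow> linear J \<and> (\<forall>v. J (J v) = - v) \<and>
      (\<forall>v w. inner (J v) (J w) = inner v w)"

definition cscale :: "('a::real_vector \<Rightarrow> 'a) \<Rightarrow> complex \<Rightarrow> 'a \<Rightarrow> 'a" where
  "cscale J c v = Re c *\<^sub>R v + Im c *\<^sub>R J v"

text \<open>Complex inner product induced by J, antilinear in the first argument.\<close>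
definition cinner :: "('a::real_inner \<Rightarrow> 'a) \<Rightarrow> 'a \<Rightarrow> 'a \<Rightarrow> complex" where
  "cinner J v w = Complex (inner v w) (- inner v (J w))"

text \<open>Complexification of the real Hilbert space h: pairs (h1,h2) standing for h1 + i h2.\<close>
definition hJ :: "'h::real_vector \<times> 'h \<Rightarrow> 'h \<times> 'h" where
  "hJ p = (- snd p, fst p)"

definition hconj :: "'h::real_vector \<times> 'h \<Rightarrow> 'h \<times> 'h" where
  "hconj p = (fst p, - snd p)"

definition separable :: "'a::topological_space itself \<Rightarrow> bool" where
  "separable _ \<longleftrightarrow> (\<exists>D::'a set. countable D \<and> closure D = UNIV)"

text \<open>A model of the symmetric Fock space over h_C: a complex Hilbert space (F,J) with the
exponential-vector map E satisfying <E f, E g> = exp <f,g>, with total exponential vectors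
(unique up to unitary equivalence); the smoothness of E along real lines (true in Fock space)
is recorded so that creation operators on exponential vectors can be written as derivatives.\<close>
definition fock_model :: "('F::{real_inner,complete_space} \<Rightarrow> 'F) \<Rightarrow>
    ('h::{real_inner,complete_space} \<times> 'h \<Rightarrow> 'F) \<Rightarrow> bool" where
  "fock_model J E \<longleftrightarrow> complex_structure J \<and>
     (\<forall>f g. cinner J (E f) (E g) = exp (cinner hJ f g)) \<and>
     closure (span (range E \<union> J ` range E)) = UNIV \<and>
     (\<forall>f h. (\<lambda>t::real. E (f + t *\<^sub>R h)) differentiable (at 0))"

definition annE :: "('F::real_inner \<Rightarrow> 'F) \<Rightarrow> ('h::real_inner \<times> 'h \<Rightarrow> 'F) \<Rightarrow>
    'h \<times> 'h \<Rightarrow> 'h \<times> 'h \<Rightarrow> 'F" where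
  "annE J E h f = cscale J (cinner hJ h f) (E f)"

definition creE :: "('h::real_vector \<times> 'h \<Rightarrow> 'F::real_normed_vector) \<Rightarrow>
    'h \<times> 'h \<Rightarrow> 'h \<times> 'h \<Rightarrow> 'F" where
  "creE E h f = vector_derivative (\<lambda>t::real. E (f + t *\<^sub>R h)) (at 0)"

definition QE :: "('F::real_inner \<Rightarrow> 'F) \<Rightarrow> ('h::real_inner \<times> 'h \<Rightarrow> 'F) \<Rightarrow>
    'h \<times> 'h \<Rightarrow> 'h \<times> 'h \<Rightarrow> 'F" where
  "QE J E h f = annE J E (hconj h) f + creE E h f"

definition PE :: "('F::real_inner \<Rightarrow> 'F) \<Rightarrow> ('h::real_inner \<times> 'h \<Rightarrow> 'F) \<Rightarrow>
    'h \<times> 'h \<Rightarrow> 'h \<times> 'h \<Rightarrow> 'F" where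
  "PE J E h f = cscale J \<i> (annE J E (hconj h) f - creE E h f)"

definition cbounded :: "('F::real_normed_vector \<Rightarrow> 'F) \<Rightarrow> ('F \<Rightarrow> 'F) \<Rightarrow> bool" where
  "cbounded J B \<longleftrightarrow> bounded_linear B \<and> (\<forall>v. B (J v) = J (B v))"

text \<open>C is the bounded operator defined by (i/2)[Q(k1) - P(k2), B], i.e.
  <E f, C E g> = (i/2) ( <X^* E f, B E g> - <E f, B X E g> ),  X = Q(k1) - P(k2),
  where on exponential vectors X^* = Q(conj k1) - P(conj k2).\<close>
definition Dk_rel :: "('F::{real_inner,complete_space} \<Rightarrow> 'F) \<Rightarrow>
    ('h::{real_inner,complete_space} \<times> 'h \<Rightarrow> 'F) \<Rightarrow>
    ('h \<times> 'h) \<Rightarrow> ('h \<times> 'h) \<Rightarrow> ('F \<Rightarrow> 'F) \<Rightarrow> ('F \<Rightarrow> 'F) \<Rightarrow> bool" where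
  "Dk_rel J E k1 k2 B C \<longleftrightarrow> cbounded J C \<and>
     (\<forall>f g. cinner J (E f) (C (E g)) =
        (\<i> / 2) * (cinner J (QE J E (hconj k1) f - PE J E (hconj k2) f) (B (E g))
                   - cinner J (E f) (B (QE J E k1 g - PE J E k2 g))))"

definition DomD :: "('F::{real_inner,complete_space} \<Rightarrow> 'F) \<Rightarrow>
    ('h::{real_inner,complete_space} \<times> 'h \<Rightarrow> 'F) \<Rightarrow>
    ('h \<times> 'h) \<Rightarrow> ('h \<times> 'h) \<Rightarrow> ('F \<Rightarrow> 'F) set" where
  "DomD J E k1 k2 = {B. cbounded J B \<and> (\<exists>C. Dk_rel J E k1 k2 B C)}"

definition Dk :: "('F::{real_inner,complete_space} \<Rightarrow> 'F) \<Rightarrow>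
    ('h::{real_inner,complete_space} \<times> 'h \<Rightarrow> 'F) \<Rightarrow>
    ('h \<times> 'h) \<Rightarrow> ('h \<times> 'h) \<Rightarrow> ('F \<Rightarrow> 'F) \<Rightarrow> ('F \<Rightarrow> 'F)" where
  "Dk J E k1 k2 B = (THE C. Dk_rel J E k1 k2 B C)"

definition vexp :: "('F::{real_inner,complete_space} \<Rightarrow> 'F) \<Rightarrow>
    ('h::{real_inner,complete_space} \<times> 'h \<Rightarrow> 'F) \<Rightarrow> ('F \<Rightarrow> 'F) \<Rightarrow> complex" where
  "vexp J E X = cinner J (E 0) (X (E 0))"

definition lin_op_on :: "('F::real_vector \<Rightarrow> 'F) \<Rightarrow> 'F set \<Rightarrow> ('F \<Rightarrow> 'F) \<Rightarrow> bool" where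
  "lin_op_on J D M \<longleftrightarrow> subspace D \<and> J ` D \<subseteq> D \<and>
     (\<forall>x\<in>D. \<forall>y\<in>D. M (x + y) = M x + M y) \<and>
     (\<forall>c. \<forall>x\<in>D. M (cscale J c x) = cscale J c (M x))"

end

theory Submission
  imports Defs "HOL-Analysis.Analysis"
begin


lemma cs_lin: "complex_structure J \<Longrightarrow> linear J" by (simp add: complex_structure_def)
lemma cs_JJ: "complex_structure J \<Longrightarrow> J (J v) = - v" by (simp add: complex_structure_def)
lemma cs_inn: "complex_structure J \<Longrightarrow> inner (J v) (J w) = inner v w" by (simp add: complex_structure_def)
lemma cs_innJ: "complex_structure J \<Longrightarrow> inner (J v) w = - inner v (J w)"
  by (metis cs_JJ cs_inn inner_minus_left)

lemma cinner_add_right: "complex_structure J \<Longrightarrow> cinner J v (x + y) = cinner J v x + cinner J v y"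
  by (simp add: cinner_def linear_add[OF cs_lin] inner_add_right complex_eq_iff)
lemma cinner_diff_right: "complex_structure J \<Longrightarrow> cinner J v (x - y) = cinner J v x - cinner J v y"
  by (simp add: cinner_def linear_diff[OF cs_lin] inner_diff_right complex_eq_iff)
lemma cinner_add_left: "cinner J (x + y) v = cinner J x v + cinner J y v"
  by (simp add: cinner_def inner_add_left complex_eq_iff)
lemma cinner_diff_left: "cinner J (x - y) v = cinner J x v - cinner J y v"
  by (simp add: cinner_def inner_diff_left complex_eq_iff)
lemma cinner_scaleR_right: "complex_structure J \<Longrightarrow> cinner J v (r *\<^sub>R w) = of_real r * cinner J v w"
  by (simp add: cinner_def linear_scale[OF cs_lin] complex_eq_iff)
lemma cinner_zero_right[simp]: "complex_structure J \<Longrightarrow> cinner J v 0 = 0"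
  by (simp add: cinner_def linear_0[OF cs_lin] complex_eq_iff)
lemma cinner_zero_left[simp]: "cinner J 0 v = 0"
  by (simp add: cinner_def complex_eq_iff)
lemma cinner_cscale_right: "complex_structure J \<Longrightarrow> cinner J v (cscale J c w) = c * cinner J v w"
  by (simp add: cinner_def cscale_def linear_add[OF cs_lin] linear_scale[OF cs_lin] cs_JJ
       inner_add_right complex_eq_iff algebra_simps)
lemma cinner_commute: "complex_structure J \<Longrightarrow> cinner J w v = cnj (cinner J v w)"
proof -
  assume a: "complex_structure J"
  have "inner w (J v) = - inner v (J w)" using cs_innJ[OF a, of v w] by (simp add: inner_commute)
  then show ?thesis by (simp add: cinner_def complex_eq_iff inner_commute)
qed
lemma cinner_cscale_left: "complex_structure J \<Longrightarrow> cinner J (cscale J c v) w = cnj c * cinner J v w"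
  by (metis cinner_commute cinner_cscale_right complex_cnj_cnj complex_cnj_mult)
lemma cinner_self: "complex_structure J \<Longrightarrow> cinner J v v = of_real (inner v v)"
proof -
  assume a: "complex_structure J"
  have "inner v (J v) = 0" using cs_innJ[OF a, of v v] by (simp add: inner_commute)
  then show ?thesis by (simp add: cinner_def complex_eq_iff)
qed
lemma cscale_i: "complex_structure J \<Longrightarrow> cscale J \<i> v = J v"
  by (simp add: cscale_def)
lemma cscale_zero[simp]: "cscale J 0 v = 0" by (simp add: cscale_def)
lemma J_cscale: "complex_structure J \<Longrightarrow> J (cscale J c v) = cscale J (\<i> * c) v"
  by (simp add: cscale_def linear_add[OF cs_lin] linear_scale[OF cs_lin] cs_JJ)

lemma hJ_cs: "complex_structure (hJ :: 'h::real_inner \<times> 'h \<Rightarrow> _)"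
  unfolding complex_structure_def
proof (intro conjI allI)
  show "linear (hJ :: 'h \<times> 'h \<Rightarrow> _)"
    by (rule linearI) (auto simp: hJ_def)
qed (auto simp: hJ_def inner_prod_def)

lemma hconj_cinner: "cinner hJ (hconj a) (hconj (b::'h::real_inner \<times> 'h)) = cnj (cinner hJ a b)"
  by (simp add: cinner_def hconj_def hJ_def inner_prod_def complex_eq_iff)
lemma hconj_hconj[simp]: "hconj (hconj a) = a" by (simp add: hconj_def)

lemma J_bl: "complex_structure J \<Longrightarrow> bounded_linear (J::'a::real_inner \<Rightarrow> 'a)"
proof (rule bounded_linear_intro[where K=1])
  assume a: "complex_structure J"
  show "J (x + y) = J x + J y" for x y using linear_add[OF cs_lin[OF a]] .
  show "J (r *\<^sub>R x) = r *\<^sub>R J x" for r x using linear_scale[OF cs_lin[OF a]] .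
  show "norm (J x) \<le> norm x * 1" for x by (simp add: norm_eq_sqrt_inner cs_inn[OF a])
qed

lemma cinner_bl: "complex_structure J \<Longrightarrow> bounded_linear (\<lambda>v. cinner J w v)"
proof -
  assume a: "complex_structure J"
  have e: "(\<lambda>v. cinner J w v) = (\<lambda>v. inner w v *\<^sub>R 1 + (- inner w (J v)) *\<^sub>R \<i>)"
    by (auto simp: cinner_def complex_eq_iff)
  have "bounded_linear (\<lambda>v. inner w (J v))"
    using bounded_linear_compose[OF bounded_linear_inner_right J_bl[OF a]] by (simp add: o_def)
  then have b2: "bounded_linear (\<lambda>v. - inner w (J v))" by (rule bounded_linear_minus)
  have c1: "bounded_linear (\<lambda>v. inner w v *\<^sub>R (1::complex))"
    using bounded_linear_compose[OF bounded_linear_scaleR_left[of "1::complex"] bounded_linear_inner_right[of w]]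
    by (simp add: o_def)
  have c2: "bounded_linear (\<lambda>v. (- inner w (J v)) *\<^sub>R \<i>)"
    using bounded_linear_compose[OF bounded_linear_scaleR_left[of "\<i>"] b2]
    by (simp add: o_def)
  show ?thesis unfolding e by (rule bounded_linear_add[OF c1 c2])
qed


lemma fm_cs: "fock_model J E \<Longrightarrow> complex_structure J" by (simp add: fock_model_def)
lemma fm_EE: "fock_model J E \<Longrightarrow> cinner J (E f) (E g) = exp (cinner hJ f g)" unfolding fock_model_def by blast

lemma L_ann: "fock_model J E \<Longrightarrow> cinner J (E f') (annE J E h g) = cinner hJ h g * exp (cinner hJ f' g)"
  by (simp add: annE_def cinner_cscale_right fm_cs fm_EE)

lemma L_cre: assumes fm: "fock_model J E"
  shows "cinner J (E f') (creE E h g) = cinner hJ f' h * exp (cinner hJ f' g)"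
proof -
  have cs: "complex_structure J" using fm by (rule fm_cs)
  have "(\<lambda>t::real. E (g + t *\<^sub>R h)) differentiable (at 0)" using fm unfolding fock_model_def by blast
  then have d: "((\<lambda>t::real. E (g + t *\<^sub>R h)) has_vector_derivative creE E h g) (at 0)"
    unfolding creE_def by (simp add: vector_derivative_works)
  have 1: "((\<lambda>t. cinner J (E f') (E (g + t *\<^sub>R h))) has_vector_derivative cinner J (E f') (creE E h g)) (at 0)"
    by (rule bounded_linear.has_vector_derivative[OF cinner_bl[OF cs] d])
  have 2: "(\<lambda>t. cinner J (E f') (E (g + t *\<^sub>R h))) = (\<lambda>t. (\<lambda>z. exp (cinner hJ f' g + z * cinner hJ f' h)) (of_real t))"
    by (simp add: fm_EE[OF fm] cinner_add_right[OF hJ_cs] cinner_scaleR_right[OF hJ_cs])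
  have "((\<lambda>z. exp (cinner hJ f' g + z * cinner hJ f' h)) has_field_derivative (cinner hJ f' h * exp (cinner hJ f' g))) (at (of_real 0))"
    by (auto intro!: derivative_eq_intros)
  then have 3: "((\<lambda>t. cinner J (E f') (E (g + t *\<^sub>R h))) has_vector_derivative (cinner hJ f' h * exp (cinner hJ f' g))) (at 0)"
    unfolding 2 by (rule has_vector_derivative_real_field)
  show ?thesis using vector_derivative_unique_at[OF 1 3] .
qed

lemma L_X: assumes fm: "fock_model J E"
  shows "cinner J (E f) (QE J E a g - PE J E b g) =
    (cinner hJ (hconj a) g + cinner hJ f a - \<i> * cinner hJ (hconj b) g + \<i> * cinner hJ f b) * exp (cinner hJ f g)"
  using fm by (simp add: QE_def PE_def cinner_diff_right cinner_add_right cinner_cscale_right fm_cs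
      L_ann L_cre algebra_simps)

lemma L_adj: assumes fm: "fock_model J E"
  shows "cinner J (QE J E (hconj a) f - PE J E (hconj b) f) (E g) = cinner J (E f) (QE J E a g - PE J E b g)"
proof -
  have cs: "complex_structure J" using fm by (rule fm_cs)
  have "cinner J (QE J E (hconj a) f - PE J E (hconj b) f) (E g) = cnj (cinner J (E g) (QE J E (hconj a) f - PE J E (hconj b) f))"
    by (rule cinner_commute[OF cs])
  also have "\<dots> = cnj ((cinner hJ (hconj (hconj a)) f + cinner hJ g (hconj a) - \<i> * cinner hJ (hconj (hconj b)) f + \<i> * cinner hJ g (hconj b)) * exp (cinner hJ g f))"
    by (simp only: L_X[OF fm])
  also have "\<dots> = (cinner hJ f a + cinner hJ (hconj a) g + \<i> * cinner hJ f b - \<i> * cinner hJ (hconj b) g) * exp (cinner hJ f g)"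
    by (simp add: exp_cnj cinner_commute[OF hJ_cs, of g f] cinner_commute[OF hJ_cs, of g "hconj a"]
         cinner_commute[OF hJ_cs, of g "hconj b"] cinner_commute[OF hJ_cs, of a f] cinner_commute[OF hJ_cs, of b f])
  also have "\<dots> = cinner J (E f) (QE J E a g - PE J E b g)"
    by (simp add: L_X[OF fm] algebra_simps)
  finally show ?thesis .
qed


definition r1 :: "('F::real_inner \<Rightarrow> 'F) \<Rightarrow> 'F \<Rightarrow> 'F \<Rightarrow> 'F \<Rightarrow> 'F" where
  "r1 J a b v = cscale J (cinner J a v) b"

lemma cinner_r1: "complex_structure J \<Longrightarrow> cinner J x (r1 J a b v) = cinner J a v * cinner J x b"
  by (simp add: r1_def cinner_cscale_right)

lemma cbounded_r1: assumes cs: "complex_structure J" shows "cbounded J (r1 J a b)"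
  unfolding cbounded_def
proof
  have e: "r1 J a b = (\<lambda>v. Re (cinner J a v) *\<^sub>R b + Im (cinner J a v) *\<^sub>R J b)"
    by (auto simp: r1_def cscale_def)
  have b1: "bounded_linear (\<lambda>v. Re (cinner J a v))"
    using bounded_linear_compose[OF bounded_linear_Re cinner_bl[OF cs]] by (simp add: o_def)
  have b2: "bounded_linear (\<lambda>v. Im (cinner J a v))"
    using bounded_linear_compose[OF bounded_linear_Im cinner_bl[OF cs]] by (simp add: o_def)
  have c1: "bounded_linear (\<lambda>v. Re (cinner J a v) *\<^sub>R b)"
    using bounded_linear_compose[OF bounded_linear_scaleR_left[of b] b1] by (simp add: o_def)
  have c2: "bounded_linear (\<lambda>v. Im (cinner J a v) *\<^sub>R J b)"
    using bounded_linear_compose[OF bounded_linear_scaleR_left[of "J b"] b2] by (simp add: o_def)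
  show "bounded_linear (r1 J a b)" unfolding e by (rule bounded_linear_add[OF c1 c2])
  show "\<forall>v. r1 J a b (J v) = J (r1 J a b v)"
  proof
    fix v
    have "cinner J a (J v) = \<i> * cinner J a v"
      using cinner_cscale_right[OF cs, of a \<i> v] by (simp add: cscale_i[OF cs])
    then show "r1 J a b (J v) = J (r1 J a b v)" by (simp add: r1_def J_cscale[OF cs])
  qed
qed

lemma cbounded_diff: assumes cs: "complex_structure J" and "cbounded J B1" "cbounded J B2"
  shows "cbounded J (\<lambda>v. B1 v - B2 v)"
  using assms unfolding cbounded_def
  by (auto intro: bounded_linear_sub simp: linear_diff[OF cs_lin[OF cs]])

lemma orth_zero: assumes fm: "fock_model J E" and h: "\<forall>f. cinner J (E f) w = 0"
  shows "w = 0"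
proof -
  have cs: "complex_structure J" using fm by (rule fm_cs)
  let ?S = "range E \<union> J ` range E"
  have S: "\<forall>s\<in>?S. inner s w = 0"
  proof
    fix s assume "s \<in> ?S"
    then obtain f where "s = E f \<or> s = J (E f)" by auto
    moreover have "inner (E f) w = 0" "inner (E f) (J w) = 0"
      using h[rule_format, of f] by (auto simp: cinner_def complex_eq_iff)
    ultimately show "inner s w = 0" by (auto simp: cs_innJ[OF cs])
  qed
  have sub: "subspace {s. inner s w = 0}"
    by (auto simp: subspace_def inner_add_left)
  have "span ?S \<subseteq> {s. inner s w = 0}"
    using span_induct[OF _ sub] S by blast
  moreover have "closed {s. inner s w = 0}"
    by (intro closed_Collect_eq continuous_intros)
  ultimately have "closure (span ?S) \<subseteq> {s. inner s w = 0}" by (rule closure_minimal)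
  moreover have "closure (span ?S) = UNIV" using fm unfolding fock_model_def by blast
  ultimately have "inner w w = 0" by blast
  then show ?thesis by simp
qed

lemma uniq: assumes fm: "fock_model J E" and c1: "cbounded J C1" and c2: "cbounded J C2"
  and h: "\<forall>f g. cinner J (E f) (C1 (E g)) = cinner J (E f) (C2 (E g))"
  shows "C1 = C2"
proof -
  have cs: "complex_structure J" using fm by (rule fm_cs)
  define D where "D = (\<lambda>v. C1 v - C2 v)"
  have cD: "cbounded J D" unfolding D_def by (rule cbounded_diff[OF cs c1 c2])
  have bl: "bounded_linear D" "\<forall>v. D (J v) = J (D v)" using cD by (auto simp: cbounded_def)
  have DE: "D (E g) = 0" for g
    by (rule orth_zero[OF fm]) (simp add: D_def cinner_diff_right[OF cs] h)
  let ?S = "range E \<union> J ` range E"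
  have S: "\<forall>s\<in>?S. D s = 0" using DE bl(2) linear_0[OF cs_lin[OF cs]] by auto
  have sub: "subspace {s. D s = 0}"
    using bl(1) unfolding subspace_def
    by (auto simp: linear_add[OF bounded_linear.linear[OF bl(1)]] linear_scale[OF bounded_linear.linear[OF bl(1)]]
          linear_0[OF bounded_linear.linear[OF bl(1)]])
  have "span ?S \<subseteq> {s. D s = 0}"
    using span_induct[OF _ sub] S by blast
  moreover have "closed {s. D s = 0}"
    by (intro closed_Collect_eq continuous_intros linear_continuous_on[OF bl(1)])
  ultimately have "closure (span ?S) \<subseteq> {s. D s = 0}" by (rule closure_minimal)
  moreover have "closure (span ?S) = UNIV" using fm unfolding fock_model_def by blast
  ultimately have "\<forall>v. D v = 0" by blast
  then show ?thesis by (auto simp: D_def)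
qed


theorem proposition6p1:
  fixes J :: "'F::{real_inner,complete_space} \<Rightarrow> 'F"
    and E :: "'h::{real_inner,complete_space} \<times> 'h \<Rightarrow> 'F"
    and k1 k2 :: "'h \<times> 'h"
  assumes "separable TYPE('h)"
    and "fock_model J E"
    and "k1 + cscale hJ \<i> k2 \<noteq> 0"
  shows "\<not> (\<exists>D M. lin_op_on J D M \<and> E 0 \<in> D \<and>
            (\<forall>B \<in> DomD J E k1 k2. B (E 0) \<in> D \<and>
               cinner J (E 0) (M (B (E 0))) = vexp J E (Dk J E k1 k2 B)))"
proof
  assume "\<exists>D M. lin_op_on J D M \<and> E 0 \<in> D \<and>
            (\<forall>B \<in> DomD J E k1 k2. B (E 0) \<in> D \<and>
               cinner J (E 0) (M (B (E 0))) = vexp J E (Dk J E k1 k2 B))"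
  then obtain D M where lin: "lin_op_on J D M" and hyp: "\<forall>B \<in> DomD J E k1 k2. B (E 0) \<in> D \<and>
               cinner J (E 0) (M (B (E 0))) = vexp J E (Dk J E k1 k2 B)" by blast
  note fm = assms(2)
  have cs: "complex_structure J" using fm by (rule fm_cs)
  define kk where "kk = k1 + cscale hJ \<i> k2"
  define X where "X g = QE J E k1 g - PE J E k2 g" for g
  define Xs where "Xs f = QE J E (hconj k1) f - PE J E (hconj k2) f" for f
  define \<phi> where "\<phi> = E kk - E 0"
  define \<psi> where "\<psi> = X 0"
  define w where "w = Xs kk - Xs 0"
  define B where "B = r1 J \<phi> (E 0)"
  define C where "C = (\<lambda>v. r1 J \<phi> (cscale J (\<i>/2) \<psi>) v - r1 J w (cscale J (\<i>/2) (E 0)) v)"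
  have adj: "cinner J (Xs f) (E g) = cinner J (E f) (X g)" for f g
    unfolding X_def Xs_def by (rule L_adj[OF fm])
  have cB: "cbounded J B" unfolding B_def by (rule cbounded_r1[OF cs])
  have cC: "cbounded J C" unfolding C_def by (intro cbounded_diff[OF cs] cbounded_r1[OF cs])
  have a1: "cinner J (Xs f) (E 0) = cinner J (E f) \<psi>" for f using adj[of f 0] by (simp add: \<psi>_def)
  have a2: "cinner J \<phi> (X g) = cinner J w (E g)" for g
    by (simp add: \<phi>_def w_def cinner_diff_left adj)
  have rel: "Dk_rel J E k1 k2 B C"
    unfolding Dk_rel_def
  proof (intro conjI allI cC)
    fix f g
    show "cinner J (E f) (C (E g)) =
        \<i> / 2 * (cinner J (QE J E (hconj k1) f - PE J E (hconj k2) f) (B (E g)) -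
                 cinner J (E f) (B (QE J E k1 g - PE J E k2 g)))"
      using a1[of f] a2[of g]
      by (simp add: C_def B_def X_def[symmetric] Xs_def[symmetric] cinner_diff_right[OF cs] cinner_r1[OF cs]
          cinner_cscale_right[OF cs] algebra_simps)
  qed
  have DkB: "Dk J E k1 k2 B = C"
    unfolding Dk_def
  proof (rule the_equality[where P="\<lambda>C. Dk_rel J E k1 k2 B C", OF rel])
    fix C' assume r': "Dk_rel J E k1 k2 B C'"
    show "C' = C"
      by (rule uniq[OF fm]) (use r' rel in \<open>auto simp only: Dk_rel_def\<close>)
  qed
  have BD: "B \<in> DomD J E k1 k2" using cB rel by (auto simp: DomD_def)
  have phi0: "cinner J \<phi> (E 0) = 0"
    by (simp add: \<phi>_def cinner_diff_left fm_EE[OF fm] cinner_zero_right[OF hJ_cs])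
  have B0: "B (E 0) = 0" by (simp add: B_def r1_def phi0)
  have "0 \<in> D" using lin by (auto simp: lin_op_on_def subspace_def)
  then have "M (0 + 0) = M 0 + M 0" using lin unfolding lin_op_on_def by blast
  then have M0: "M 0 = 0" by simp
  have v0: "vexp J E C = 0" using hyp BD B0 M0 DkB cs by auto
  have kk0: "inner kk kk \<noteq> 0" using assms(3) by (simp add: kk_def)
  have phipsi: "cinner J \<phi> \<psi> = of_real (inner kk kk)"
  proof -
    have "cinner J \<phi> \<psi> = cinner hJ kk k1 + \<i> * cinner hJ kk k2"
      by (simp add: \<phi>_def \<psi>_def X_def cinner_diff_left L_X[OF fm] cinner_zero_right[OF hJ_cs])
    also have "\<dots> = cinner hJ kk kk"
      by (simp add: kk_def cinner_add_right[OF hJ_cs] cinner_cscale_right[OF hJ_cs])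
    finally show ?thesis by (simp add: cinner_self[OF hJ_cs])
  qed
  have "vexp J E C = \<i> / 2 * (cinner J (Xs 0) (B (E 0)) - cinner J (E 0) (B (X 0)))"
    using rel unfolding Dk_rel_def vexp_def X_def Xs_def by blast
  also have "\<dots> = - (\<i> / 2) * of_real (inner kk kk)"
    by (simp add: B0 cs B_def cinner_r1[OF cs] fm_EE[OF fm] cinner_zero_right[OF hJ_cs] \<psi>_def[symmetric] phipsi phi0)
  finally have "vexp J E C \<noteq> 0" using kk0 by simp
  then show False using v0 by simp
qed

end
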